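(* Let $G=(V,E)$ be a graph with $n$ vertices and let $f_0, f_t$ be token-placements of $G$ with $f_0 \simeq f_t$. Then $\mathrm{OPT}(f_0,f_t) \le \binom{n}{2}$.
   Context: Graphs are finite, simple and undirected; $n=|V|$. Let $C=\{1,\dots,c\}$ be a set of colors. A token-placement of $G$ is a surjective map $f\colon V\to C$ ($f(v)$ is the color of the token on $v$). Two distinct token-placements $f,f'$ are adjacent if there is an edge $uv\in E$ with $f'(u)=f(v)$, $f'(v)=f(u)$ and $f'(w)=f(w)$ for all $w\in V\setminus\{u,v\}$ (i.e. $f'$ arises from $f$ by swapping the tokens on the adjacent vertices $u,v$). A swapping sequence between $f$ and $f'$ is a sequence $f_1=f,f_2,\dots,f_h=f'$ of token-placements in which $f_{k-1}$ and $f_k$ are adjacent for all $k$; its length is $h-1$. $\mathrm{OPT}(f,f')$ denotes the minimum length of a swapping sequence between $f$ and $f'$ ($\infty$ if none exists). We write $f\simeq f'$ if for every connected component $K$ of $G$ and every color $i$, the number of vertices of $K$ with $f$-color $i$ equals the number with $f'$-color $i$. *)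

theory Defs
  imports Main "HOL-Library.Extended_Nat"
begin

definition simple_graph :: "'a set \<Rightarrow> 'a set set \<Rightarrow> bool" where
  "simple_graph V E \<longleftrightarrow> finite V \<and>
     (\<forall>e\<in>E. \<exists>u v. e = {u, v} \<and> u \<in> V \<and> v \<in> V \<and> u \<noteq> v)"

text \<open>Token-placement: surjective map V -> {1..c}; normalised to 0 outside V so that
  placements are determined by their values on V.\<close>
definition token_placement :: "'a set \<Rightarrow> nat \<Rightarrow> ('a \<Rightarrow> nat) \<Rightarrow> bool" where
  "token_placement V c f \<longleftrightarrow> f ` V = {1..c} \<and> (\<forall>x. x \<notin> V \<longrightarrow> f x = 0)"

definition tp_adjacent :: "'a set \<Rightarrow> 'a set set \<Rightarrow> nat \<Rightarrow> ('a \<Rightarrow> nat) \<Rightarrow> ('a \<Rightarrow> nat) \<Rightarrow> bool" where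
  "tp_adjacent V E c f f' \<longleftrightarrow> token_placement V c f \<and> token_placement V c f' \<and> f \<noteq> f' \<and>
     (\<exists>u v. {u, v} \<in> E \<and> f' u = f v \<and> f' v = f u \<and> (\<forall>w \<in> V - {u, v}. f' w = f w))"

text \<open>A swapping sequence f_1 = f, ..., f_h = f' given as a nonempty list; its length is h - 1.\<close>
definition swapping_sequence ::
  "'a set \<Rightarrow> 'a set set \<Rightarrow> nat \<Rightarrow> ('a \<Rightarrow> nat) list \<Rightarrow> ('a \<Rightarrow> nat) \<Rightarrow> ('a \<Rightarrow> nat) \<Rightarrow> bool" where
  "swapping_sequence V E c fs f f' \<longleftrightarrow> fs \<noteq> [] \<and> hd fs = f \<and> last fs = f' \<and>
     (\<forall>i\<in>set fs. token_placement V c i) \<and>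
     (\<forall>k. Suc k < length fs \<longrightarrow> tp_adjacent V E c (fs ! k) (fs ! Suc k))"

definition OPT :: "'a set \<Rightarrow> 'a set set \<Rightarrow> nat \<Rightarrow> ('a \<Rightarrow> nat) \<Rightarrow> ('a \<Rightarrow> nat) \<Rightarrow> enat" where
  "OPT V E c f f' = (INF fs \<in> {fs. swapping_sequence V E c fs f f'}. enat (length fs - 1))"

definition component :: "'a set \<Rightarrow> 'a set set \<Rightarrow> 'a \<Rightarrow> 'a set" where
  "component V E v = {w \<in> V. (\<lambda>x y. {x, y} \<in> E)\<^sup>*\<^sup>* v w}"

definition tp_equiv :: "'a set \<Rightarrow> 'a set set \<Rightarrow> nat \<Rightarrow> ('a \<Rightarrow> nat) \<Rightarrow> ('a \<Rightarrow> nat) \<Rightarrow> bool" where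
  "tp_equiv V E c f f' \<longleftrightarrow> (\<forall>v\<in>V. \<forall>i\<in>{1..c}.
     card {w \<in> component V E v. f w = i} = card {w \<in> component V E v. f' w = i})"

end

theory Submission
  imports Defs
begin

definition adjS :: "'a set set \<Rightarrow> 'a set \<Rightarrow> 'a \<Rightarrow> 'a \<Rightarrow> bool" where
  "adjS E S x y \<longleftrightarrow> {x, y} \<in> E \<and> x \<in> S \<and> y \<in> S"

definition compS :: "'a set set \<Rightarrow> 'a set \<Rightarrow> 'a \<Rightarrow> 'a set" where
  "compS E S v = {w \<in> S. (adjS E S)\<^sup>*\<^sup>* v w}"

definition reach :: "'a set \<Rightarrow> 'a set set \<Rightarrow> nat \<Rightarrow> ('a \<Rightarrow> nat) \<Rightarrow> ('a \<Rightarrow> nat) \<Rightarrow> nat \<Rightarrow> bool" where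
  "reach V E c h g k \<longleftrightarrow> (\<exists>fs. swapping_sequence V E c fs h g \<and> length fs \<le> Suc k)"

definition swp :: "('a \<Rightarrow> nat) \<Rightarrow> 'a \<Rightarrow> 'a \<Rightarrow> 'a \<Rightarrow> nat" where
  "swp f x y = f(x := f y, y := f x)"

lemma adjS_sym: "adjS E S x y \<Longrightarrow> adjS E S y x"
  by (auto simp: adjS_def insert_commute)

lemma rtranclp_adjS_sym: "(adjS E S)\<^sup>*\<^sup>* x y \<Longrightarrow> (adjS E S)\<^sup>*\<^sup>* y x"
  by (induction rule: rtranclp_induct) (auto intro: converse_rtranclp_into_rtranclp adjS_sym)

lemma comp_eq: assumes "x \<in> compS E S r" shows "compS E S x = compS E S r"
proof -
  have "(adjS E S)\<^sup>*\<^sup>* r x" using assms by (simp add: compS_def)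
  then show ?thesis unfolding compS_def
    by (auto intro: rtranclp_trans dest: rtranclp_adjS_sym)
qed

lemma in_comp_self: "v \<in> S \<Longrightarrow> v \<in> compS E S v"
  by (simp add: compS_def)

lemma reach_refl: "token_placement V c f \<Longrightarrow> reach V E c f f k"
  unfolding reach_def swapping_sequence_def by (rule exI[of _ "[f]"]) auto

lemma reach_mono: "reach V E c h g a \<Longrightarrow> a \<le> b \<Longrightarrow> reach V E c h g b"
  unfolding reach_def by fastforce

lemma reach_tp: "reach V E c h g k \<Longrightarrow> token_placement V c g"
  unfolding reach_def swapping_sequence_def by (metis last_in_set)

lemma edge_in_V: "simple_graph V E \<Longrightarrow> {x, y} \<in> E \<Longrightarrow> x \<in> V \<and> y \<in> V"
  unfolding simple_graph_def by (metis doubleton_eq_iff insertI1)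

lemma swp_tp:
  assumes "simple_graph V E" "token_placement V c g" "{x, y} \<in> E"
  shows "token_placement V c (swp g x y)"
proof -
  have xy: "x \<in> V" "y \<in> V" using edge_in_V assms by metis+
  have "swp g x y ` V = g ` V"
  proof
    show "swp g x y ` V \<subseteq> g ` V" using xy by (auto simp: swp_def)
    show "g ` V \<subseteq> swp g x y ` V"
    proof
      fix z assume "z \<in> g ` V"
      then obtain w where w: "w \<in> V" "z = g w" by auto
      show "z \<in> swp g x y ` V"
      proof (cases "w = x \<or> w = y")
        case True
        then show ?thesis using xy w
          by (auto simp: swp_def image_iff intro: bexI[of _ x] bexI[of _ y])
      next
        case False
        then show ?thesis using w by (auto simp: swp_def image_iff intro!: bexI[of _ w])
      qed
    qed
  qed
  then show ?thesis using assms(2) xy unfolding token_placement_def by (auto simp: swp_def)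
qed

lemma reach_step:
  assumes G: "simple_graph V E" and r: "reach V E c h g k" and e: "{x, y} \<in> E"
  shows "reach V E c h (swp g x y) (Suc k)"
proof (cases "swp g x y = g")
  case True
  then show ?thesis using r reach_mono by fastforce
next
  case False
  have tg: "token_placement V c g" using r reach_tp by metis
  have tg': "token_placement V c (swp g x y)" using swp_tp G tg e by metis
  have adj: "tp_adjacent V E c g (swp g x y)"
    unfolding tp_adjacent_def using tg tg' False e
    by (intro conjI exI[of _ x] exI[of _ y]) (auto simp: swp_def)
  obtain fs where fs: "swapping_sequence V E c fs h g" "length fs \<le> Suc k"
    using r unfolding reach_def by auto
  let ?fs = "fs @ [swp g x y]"
  have ne: "fs \<noteq> []" "hd fs = h" "last fs = g" "\<forall>i\<in>set fs. token_placement V c i"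
    "\<forall>k. Suc k < length fs \<longrightarrow> tp_adjacent V E c (fs ! k) (fs ! Suc k)"
    using fs(1) unfolding swapping_sequence_def by auto
  have "\<forall>j. Suc j < length ?fs \<longrightarrow> tp_adjacent V E c (?fs ! j) (?fs ! Suc j)"
  proof (intro allI impI)
    fix j assume j: "Suc j < length ?fs"
    show "tp_adjacent V E c (?fs ! j) (?fs ! Suc j)"
    proof (cases "Suc j < length fs")
      case True
      then show ?thesis using ne(5) by (simp add: nth_append)
    next
      case False
      then have "j = length fs - 1" "Suc j = length fs" using j by auto
      then show ?thesis using adj ne(1,3) by (simp add: nth_append last_conv_nth)
    qed
  qed
  then have "swapping_sequence V E c ?fs h (swp g x y)"
    unfolding swapping_sequence_def using ne tg' by auto
  then show ?thesis unfolding reach_def using fs(2) by (intro exI[of _ ?fs]) auto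
qed


lemma swp_count:
  assumes "x \<in> A \<longleftrightarrow> y \<in> A"
  shows "card {w\<in>A. swp f x y w = i} = card {w\<in>A. f w = i}"
proof -
  define t where "t w = (if w = x then y else if w = y then x else w)" for w
  have sw: "swp f x y = f \<circ> t" by (auto simp: swp_def t_def fun_eq_iff)
  have tt: "t (t w) = w" for w by (auto simp: t_def)
  have inj: "inj_on t {w\<in>A. swp f x y w = i}" 
  proof (rule inj_onI)
    fix a b assume "t a = t b"
    then have "t (t a) = t (t b)" by simp
    then show "a = b" by (simp only: tt)
  qed
  have tA: "t w \<in> A" if w: "w \<in> A" for w
  proof -
    have "w = x \<Longrightarrow> t w = y" "w = y \<Longrightarrow> t w = x" "w \<noteq> x \<Longrightarrow> w \<noteq> y \<Longrightarrow> t w = w"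
      by (auto simp: t_def)
    then show ?thesis using w assms by metis
  qed
  have "t ` {w\<in>A. swp f x y w = i} = {w\<in>A. f w = i}"
  proof
    show "t ` {w\<in>A. swp f x y w = i} \<subseteq> {w\<in>A. f w = i}"
    proof
      fix z assume "z \<in> t ` {w\<in>A. swp f x y w = i}"
      then obtain w where w: "w \<in> A" "f (t w) = i" "z = t w" by (auto simp: sw)
      then show "z \<in> {w\<in>A. f w = i}" using tA by simp
    qed
    show "{w\<in>A. f w = i} \<subseteq> t ` {w\<in>A. swp f x y w = i}"
    proof
      fix w assume w: "w \<in> {w\<in>A. f w = i}"
      have "t w \<in> {w\<in>A. swp f x y w = i}" using w tA by (simp add: sw tt)
      then have "t (t w) \<in> t ` {w\<in>A. swp f x y w = i}" by (rule imageI)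
      then show "w \<in> t ` {w\<in>A. swp f x y w = i}" by (simp only: tt)
    qed
  qed
  then show ?thesis using card_image[OF inj] by simp
qed

lemma move:
  assumes G: "simple_graph V E" and w: "(adjS E S ^^ m) a b" and r: "reach V E c h f k"
  shows "\<exists>f'. reach V E c h f' (k + m) \<and> f' b = f a \<and> (\<forall>w. w \<notin> S \<longrightarrow> f' w = f w) \<and>
    (\<forall>A i. (\<forall>x y. adjS E S x y \<longrightarrow> (x \<in> A \<longleftrightarrow> y \<in> A)) \<longrightarrow>
        card {w\<in>A. f' w = i} = card {w\<in>A. f w = i})"
  using w
proof (induction m arbitrary: b)
  case 0
  then show ?case using r by auto
next
  case (Suc m)
  obtain y where y: "(adjS E S ^^ m) a y" "adjS E S y b" using Suc.prems relpowp_Suc_E by metis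
  obtain f1 where f1: "reach V E c h f1 (k + m)" "f1 y = f a" "\<forall>w. w \<notin> S \<longrightarrow> f1 w = f w"
    "\<forall>A i. (\<forall>x y. adjS E S x y \<longrightarrow> (x \<in> A \<longleftrightarrow> y \<in> A)) \<longrightarrow>
        card {w\<in>A. f1 w = i} = card {w\<in>A. f w = i}"
    using Suc.IH[OF y(1)] by blast
  have e: "{y, b} \<in> E" "y \<in> S" "b \<in> S" using y(2) by (auto simp: adjS_def)
  show ?case
  proof (intro exI[of _ "swp f1 y b"] conjI allI impI)
    show "reach V E c h (swp f1 y b) (k + Suc m)" using reach_step[OF G f1(1) e(1)] by simp
    show "swp f1 y b b = f a" using f1(2) by (simp add: swp_def)
    show "swp f1 y b w = f w" if "w \<notin> S" for w using that e f1(3) by (auto simp: swp_def)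
    fix A i assume A: "\<forall>x y. adjS E S x y \<longrightarrow> (x \<in> A \<longleftrightarrow> y \<in> A)"
    have "card {w\<in>A. swp f1 y b w = i} = card {w\<in>A. f1 w = i}"
      by (rule swp_count) (use A y(2) in blast)
    then show "card {w\<in>A. swp f1 y b w = i} = card {w\<in>A. f w = i}" using f1(4) A by simp
  qed
qed

lemma walk_bound:
  assumes T: "finite T" and R: "\<And>a b. R a b \<Longrightarrow> a \<in> T \<and> b \<in> T" and x: "x \<in> T"
    and w: "(R ^^ n) x y"
  shows "\<exists>m. m < card T \<and> (R ^^ m) x y"
proof -
  define m where "m = (LEAST m. (R ^^ m) x y)"
  have wm: "(R ^^ m) x y" unfolding m_def by (rule LeastI[of _ n]) (rule w)
  have least: "\<And>m'. (R ^^ m') x y \<Longrightarrow> m \<le> m'" unfolding m_def by (rule Least_le)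
  have "m < card T"
  proof (rule ccontr)
    assume "\<not> m < card T"
    then have mT: "card T < card {0..m}" by simp
    obtain f where f: "f 0 = x" "f m = y" "\<forall>i<m. R (f i) (f (Suc i))"
      using wm relpowp_fun_conv by metis
    have fT: "f ` {0..m} \<subseteq> T"
    proof
      fix z assume "z \<in> f ` {0..m}"
      then obtain i where i: "i \<le> m" "z = f i" by auto
      show "z \<in> T"
      proof (cases i)
        case 0 then show ?thesis using i x f by simp
      next
        case (Suc p) then show ?thesis using i f(3) R by (metis Suc_le_lessD)
      qed
    qed
    have "\<not> inj_on f {0..m}"
      using card_inj_on_le[OF _ fT T] mT by fastforce
    then obtain i j where ij: "i < j" "j \<le> m" "f i = f j"
      unfolding inj_on_def by (metis atLeastAtMost_iff linorder_neqE_nat)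
    define g where "g k = (if k \<le> i then f k else f (k + (j - i)))" for k
    define m' where "m' = m - (j - i)"
    have "(R ^^ m') x y"
      unfolding relpowp_fun_conv
    proof (intro exI[of _ g] conjI allI impI)
      show "g 0 = x" using f by (simp add: g_def)
      show "g m' = y"
      proof (cases "m' = i")
        case True
        then have "m = j" using ij by (simp add: m'_def)
        then show ?thesis using f ij True by (simp add: g_def)
      next
        case False
        then have "\<not> m' \<le> i" "m' + (j - i) = m" using ij by (auto simp: m'_def)
        then show ?thesis using f by (simp add: g_def)
      qed
      fix k assume k: "k < m'"
      show "R (g k) (g (Suc k))"
      proof (cases "k < i")
        case True then show ?thesis using f(3) ij by (auto simp: g_def)
      next
        case False
        show ?thesis
        proof (cases "k = i")
          case True
          then have "g k = f j" "g (Suc k) = f (Suc j)" using ij by (auto simp: g_def)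
          moreover have "j < m" using k True ij by (auto simp: m'_def)
          ultimately show ?thesis using f(3) by simp
        next
          case False
          then have "g k = f (k + (j - i))" "g (Suc k) = f (Suc (k + (j - i)))"
            using \<open>\<not> k < i\<close> by (auto simp: g_def)
          moreover have "k + (j - i) < m" using k ij by (auto simp: m'_def)
          ultimately show ?thesis using f(3) by simp
        qed
      qed
    qed
    then have "m \<le> m'" by (rule least)
    then show False using ij by (auto simp: m'_def)
  qed
  then show ?thesis using wm by blast
qed

lemma farthest:
  assumes S: "finite S" and r: "r \<in> S"
  shows "\<exists>v\<in>compS E S r. \<forall>w\<in>compS E S r - {v}. (adjS E (S - {v}))\<^sup>*\<^sup>* r w"
proof -
  let ?R = "adjS E S"
  let ?K = "compS E S r"
  define d where "d w = (LEAST n. (?R ^^ n) r w)" for w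
  have Kfin: "finite ?K" using S by (simp add: compS_def)
  have Kne: "r \<in> ?K" using r by (simp add: compS_def)
  obtain v where v: "v \<in> ?K" "d v = Max (d ` ?K)"
    using Max_in[of "d ` ?K"] Kfin Kne by fastforce
  have vmax: "\<And>w. w \<in> ?K \<Longrightarrow> d w \<le> d v" using v Kfin by simp
  have claim: "\<And>w. (?R ^^ n) r w \<Longrightarrow> n \<le> d v \<Longrightarrow> w \<noteq> v \<Longrightarrow> (adjS E (S - {v}))\<^sup>*\<^sup>* r w" for n
  proof (induction n)
    case 0 then show ?case by simp
  next
    case (Suc n)
    obtain p where p: "(?R ^^ n) r p" "?R p w" using Suc.prems(1) relpowp_Suc_E by metis
    have "p \<noteq> v"
    proof
      assume "p = v"
      then have "d v \<le> n" using p(1) unfolding d_def by (simp add: Least_le)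
      then show False using Suc.prems(2) by simp
    qed
    then have "(adjS E (S - {v}))\<^sup>*\<^sup>* r p" using Suc.IH[OF p(1)] Suc.prems(2) by simp
    moreover have "adjS E (S - {v}) p w" using p(2) \<open>p \<noteq> v\<close> Suc.prems(3)
      by (auto simp: adjS_def)
    ultimately show ?case by (rule rtranclp.rtrancl_into_rtrancl)
  qed
  have "\<forall>w\<in>?K - {v}. (adjS E (S - {v}))\<^sup>*\<^sup>* r w"
  proof
    fix w assume w: "w \<in> ?K - {v}"
    then have "?R\<^sup>*\<^sup>* r w" by (simp add: compS_def)
    then have "\<exists>n. (?R ^^ n) r w" by (rule rtranclp_imp_relpowp)
    then have "(?R ^^ d w) r w" unfolding d_def by (rule LeastI_ex)
    then show "(adjS E (S - {v}))\<^sup>*\<^sup>* r w" using claim vmax w by blast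
  qed
  then show ?thesis using v by blast
qed


lemma comp_closed:
  assumes "adjS E S a b" shows "a \<in> compS E S x \<longleftrightarrow> b \<in> compS E S x"
proof -
  have "b \<in> S" "a \<in> S" using assms by (auto simp: adjS_def)
  moreover have "(adjS E S)\<^sup>*\<^sup>* x a \<Longrightarrow> (adjS E S)\<^sup>*\<^sup>* x b" using assms by auto
  moreover have "(adjS E S)\<^sup>*\<^sup>* x b \<Longrightarrow> (adjS E S)\<^sup>*\<^sup>* x a" using adjS_sym[OF assms] by auto
  ultimately show ?thesis unfolding compS_def by blast
qed

lemma comp_sub: "compS E S x \<subseteq> S" by (auto simp: compS_def)

lemma adjS_mono: "S' \<subseteq> S \<Longrightarrow> (adjS E S')\<^sup>*\<^sup>* x w \<Longrightarrow> (adjS E S)\<^sup>*\<^sup>* x w"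
  by (erule rtranclp_mono[THEN predicate2D, rotated]) (auto simp: adjS_def)

lemma comp_avoid:
  assumes x: "x \<in> S" and v: "v \<notin> compS E S x"
  shows "compS E (S - {v}) x = compS E S x"
proof
  show "compS E (S - {v}) x \<subseteq> compS E S x"
    using adjS_mono[of "S - {v}" S] by (auto simp: compS_def)
  have "(adjS E S)\<^sup>*\<^sup>* x w \<Longrightarrow> (adjS E (S - {v}))\<^sup>*\<^sup>* x w" for w
  proof (induction rule: rtranclp_induct)
    case base then show ?case by simp
  next
    case (step y z)
    have yz: "y \<in> S" "z \<in> S" using step(2) by (auto simp: adjS_def)
    have "y \<in> compS E S x" using yz step(1) by (simp add: compS_def)
    moreover have "z \<in> compS E S x" using yz step(1,2) by (auto simp: compS_def)
    ultimately have "y \<in> compS E S x" "z \<in> compS E S x" by auto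
    then have "adjS E (S - {v}) y z" using step(2) v by (auto simp: adjS_def)
    then show ?case using step(3) by simp
  qed
  then show "compS E S x \<subseteq> compS E (S - {v}) x" using v by (auto simp: compS_def)
qed

lemma card_minus_v:
  "card {w\<in>K - {v}. P w} = card {w\<in>K. P w} - (if v \<in> K \<and> P v then 1 else 0)"
proof -
  have "{w\<in>K - {v}. P w} = {w\<in>K. P w} - {v}" by auto
  then show ?thesis by (simp add: card_Diff_singleton_if)
qed

lemma main:
  assumes G: "simple_graph V E"
  shows "card S = n \<Longrightarrow> S \<subseteq> V \<Longrightarrow> token_placement V c g \<Longrightarrow> (\<forall>w. w \<notin> S \<longrightarrow> f w = g w) \<Longrightarrow>
    (\<forall>x\<in>S. \<forall>i. card {w \<in> compS E S x. f w = i} = card {w \<in> compS E S x. g w = i}) \<Longrightarrow>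
    reach V E c h f k \<Longrightarrow> reach V E c h g (k + (n choose 2))"
proof -
  have finV: "finite V" using G by (simp add: simple_graph_def)
  show "card S = n \<Longrightarrow> S \<subseteq> V \<Longrightarrow> token_placement V c g \<Longrightarrow> (\<forall>w. w \<notin> S \<longrightarrow> f w = g w) \<Longrightarrow>
    (\<forall>x\<in>S. \<forall>i. card {w \<in> compS E S x. f w = i} = card {w \<in> compS E S x. g w = i}) \<Longrightarrow>
    reach V E c h f k \<Longrightarrow> reach V E c h g (k + (n choose 2))"
proof (induction n arbitrary: S f k)
  case 0
  have "finite S" using 0(2) finV by (rule finite_subset)
  then have "S = {}" using 0(1) by simp
  then have "f = g" using 0(4) by (simp add: fun_eq_iff)
  then show ?case using 0(6) by (simp add: numeral_2_eq_2)
next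
  case (Suc n)
  have finS: "finite S" using Suc.prems(2) finV by (rule finite_subset)
  have "S \<noteq> {}" using Suc.prems(1) by auto
  then obtain r where r: "r \<in> S" by blast
  define K where "K = compS E S r"
  obtain v where v: "v \<in> K" and far: "\<forall>w\<in>K - {v}. (adjS E (S - {v}))\<^sup>*\<^sup>* r w"
    using farthest[OF finS r] unfolding K_def by blast
  have vS: "v \<in> S" using v comp_sub K_def by fast
  have finK: "finite K" using finS comp_sub K_def finite_subset by metis
  have "{w\<in>K. g w = g v} \<noteq> {}" using v by blast
  moreover have "finite {w\<in>K. g w = g v}" using finK by simp
  ultimately have "card {w\<in>K. g w = g v} > 0" by (simp add: card_gt_0_iff)
  moreover have "card {w\<in>K. f w = g v} = card {w\<in>K. g w = g v}"
    using Suc.prems(5) r unfolding K_def by blast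
  ultimately have "card {w\<in>K. f w = g v} \<noteq> 0" by simp
  then have "{w\<in>K. f w = g v} \<noteq> {}" by (metis card.empty)
  then obtain u where u: "u \<in> K" "f u = g v" by blast
  have ru: "(adjS E S)\<^sup>*\<^sup>* r u" "(adjS E S)\<^sup>*\<^sup>* r v" "u \<in> S" using u v by (auto simp: K_def compS_def)
  then have "(adjS E S)\<^sup>*\<^sup>* u v" by (meson rtranclp_adjS_sym rtranclp_trans)
  then obtain n0 where n0: "(adjS E S ^^ n0) u v" using rtranclp_imp_relpowp by metis
  have Rb: "\<And>a b. adjS E S a b \<Longrightarrow> a \<in> S \<and> b \<in> S" by (simp add: adjS_def)
  obtain m where m: "m < card S" "(adjS E S ^^ m) u v"
    using walk_bound[OF finS Rb ru(3) n0] by blast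
  obtain f' where f': "reach V E c h f' (k + m)" "f' v = f u" "\<forall>w. w \<notin> S \<longrightarrow> f' w = f w"
    "\<forall>A i. (\<forall>x y. adjS E S x y \<longrightarrow> (x \<in> A \<longleftrightarrow> y \<in> A)) \<longrightarrow>
        card {w\<in>A. f' w = i} = card {w\<in>A. f w = i}"
    using move[OF G m(2) Suc.prems(6)] by (elim exE conjE) (rule that; assumption)
  have cl: "card {w\<in>compS E S x. f' w = i} = card {w\<in>compS E S x. f w = i}" for x i
  proof -
    have "\<forall>a b. adjS E S a b \<longrightarrow> (a \<in> compS E S x \<longleftrightarrow> b \<in> compS E S x)"
    proof (intro allI impI)
      fix a b assume "adjS E S a b"
      then show "a \<in> compS E S x \<longleftrightarrow> b \<in> compS E S x" by (rule comp_closed)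
    qed
    then show ?thesis using f'(4) by simp
  qed
  define S' where "S' = S - {v}"
  have cS': "card S' = n" using Suc.prems(1) vS finS by (simp add: S'_def)
  have out: "\<forall>w. w \<notin> S' \<longrightarrow> f' w = g w"
    using f'(2,3) u(2) Suc.prems(4) by (auto simp: S'_def)
  have cnt: "\<forall>x\<in>S'. \<forall>i. card {w \<in> compS E S' x. f' w = i} = card {w \<in> compS E S' x. g w = i}"
  proof (intro ballI allI)
    fix x i assume x: "x \<in> S'"
    show "card {w \<in> compS E S' x. f' w = i} = card {w \<in> compS E S' x. g w = i}"
    proof (cases "x \<in> K")
      case True
      have cK: "compS E S x = K" using True comp_eq K_def by metis
      have eq: "compS E S' x = K - {v}"
      proof
        show "compS E S' x \<subseteq> K - {v}"
          using adjS_mono[of S' S E x] cK by (auto simp: compS_def S'_def)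
        show "K - {v} \<subseteq> compS E S' x"
        proof
          fix w assume w: "w \<in> K - {v}"
          have "(adjS E S')\<^sup>*\<^sup>* r x" using far True x by (simp add: S'_def)
          then have "(adjS E S')\<^sup>*\<^sup>* x r" by (rule rtranclp_adjS_sym)
          moreover have "(adjS E S')\<^sup>*\<^sup>* r w" using far w by (simp add: S'_def)
          ultimately have "(adjS E S')\<^sup>*\<^sup>* x w" by (rule rtranclp_trans)
          moreover have "w \<in> S'" using w comp_sub K_def by (fastforce simp: S'_def)
          ultimately show "w \<in> compS E S' x" by (simp add: compS_def)
        qed
      qed
      have "card {w\<in>K. f' w = i} = card {w\<in>K. g w = i}"
        using cl[of r i] Suc.prems(5) r unfolding K_def by metis
      then show ?thesis unfolding eq card_minus_v using f'(2) u(2) by simp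
    next
      case False
      have xS: "x \<in> S" using x by (simp add: S'_def)
      have "v \<notin> compS E S x"
      proof
        assume "v \<in> compS E S x"
        then have "compS E S v = compS E S x" by (rule comp_eq)
        moreover have "compS E S v = K" using v comp_eq K_def by metis
        ultimately show False using False in_comp_self[OF xS] by simp
      qed
      then have "compS E S' x = compS E S x" using comp_avoid xS by (simp add: S'_def)
      then show ?thesis using cl Suc.prems(5) xS by simp
    qed
  qed
  have "reach V E c h g (k + m + (n choose 2))"
    using Suc.IH[OF cS' _ Suc.prems(3) out cnt f'(1)] Suc.prems(2) by (auto simp: S'_def)
  moreover have "k + m + (n choose 2) \<le> k + (Suc n choose 2)"
  proof -
    have "Suc n choose 2 = n + (n choose 2)"
      by (simp add: numeral_2_eq_2)
    then show ?thesis using m(1) Suc.prems(1) by simp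
  qed
  ultimately show ?case by (rule reach_mono)
qed
qed

theorem mainTheorem1:
  fixes V :: "'a set" and E :: "'a set set" and c :: nat and f0 ft :: "'a \<Rightarrow> nat"
  assumes "simple_graph V E"
    and "token_placement V c f0" and "token_placement V c ft"
    and "tp_equiv V E c f0 ft"
  shows "OPT V E c f0 ft \<le> enat (card V choose 2)"
proof -
  have adjV: "adjS E V = (\<lambda>x y. {x, y} \<in> E)"
    using edge_in_V[OF assms(1)] by (auto simp: adjS_def fun_eq_iff)
  have cV: "compS E V x = component V E x" for x
    unfolding compS_def component_def adjV ..
  have cnt: "\<forall>x\<in>V. \<forall>i. card {w \<in> compS E V x. f0 w = i} = card {w \<in> compS E V x. ft w = i}"
  proof (intro ballI allI)
    fix x i assume x: "x \<in> V"
    show "card {w \<in> compS E V x. f0 w = i} = card {w \<in> compS E V x. ft w = i}"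
    proof (cases "i \<in> {1..c}")
      case True
      then show ?thesis using assms(4) x unfolding tp_equiv_def cV by blast
    next
      case False
      have e: "{w \<in> compS E V x. f0 w = i} = {}" "{w \<in> compS E V x. ft w = i} = {}"
        using False assms(2,3) comp_sub[of E V x] unfolding token_placement_def by blast+
      show ?thesis unfolding e ..
    qed
  qed
  have out: "\<forall>w. w \<notin> V \<longrightarrow> f0 w = ft w" using assms(2,3) by (simp add: token_placement_def)
  have "reach V E c f0 ft (0 + (card V choose 2))"
    using main[OF assms(1) refl order_refl assms(3) out cnt reach_refl[OF assms(2)]] .
  then obtain fs where fs: "swapping_sequence V E c fs f0 ft" "length fs \<le> Suc (card V choose 2)"
    unfolding reach_def by auto
  have "OPT V E c f0 ft \<le> enat (length fs - 1)"
    unfolding OPT_def by (rule INF_lower) (use fs in simp)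
  also have "\<dots> \<le> enat (card V choose 2)" using fs(2) by simp
  finally show ?thesis .
qed

end
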